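(* Let $\mathcal{H}$ be a complex Hilbert space and $A,B\in\mathcal{B}(\mathcal{H})$. Then for every non-negative non-decreasing convex function $h$ on $[0,\infty)$, \[ h\big(\omega(A^{*}B)\big) \leq \frac{1}{2} h\big(\|A\|\,\|B\|\big) + \frac{1}{2} h\big(\omega(BA^{*})\big). \]
   Context: $\omega(T)=\sup\{|\langle Tx,x\rangle|:x\in\mathcal{H},\|x\|=1\}$ denotes the numerical radius and $\|\cdot\|$ the operator norm. *)

theory Defs
  imports "HOL-Analysis.Analysis"
begin

class complex_vector = real_vector +
  fixes scaleC :: "complex \<Rightarrow> 'a \<Rightarrow> 'a" (infixr "*\<^sub>C" 75)
  assumes scaleC_add_right: "a *\<^sub>C (x + y) = a *\<^sub>C x + a *\<^sub>C y"
    and scaleC_add_left: "(a + b) *\<^sub>C x = a *\<^sub>C x + b *\<^sub>C x"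
    and scaleC_scaleC: "a *\<^sub>C (b *\<^sub>C x) = (a * b) *\<^sub>C x"
    and scaleC_one: "1 *\<^sub>C x = x"
    and scaleR_scaleC: "scaleR r x = complex_of_real r *\<^sub>C x"

class complex_inner = real_normed_vector + complex_vector +
  fixes cinner :: "'a \<Rightarrow> 'a \<Rightarrow> complex"
  assumes cinner_commute: "cinner x y = cnj (cinner y x)"
    and cinner_add_left: "cinner (x + y) z = cinner x z + cinner y z"
    and cinner_scaleC_left: "cinner (a *\<^sub>C x) y = a * cinner x y"
    and cinner_real_nonneg: "Im (cinner x x) = 0 \<and> Re (cinner x x) \<ge> 0"
    and cinner_eq_zero_iff: "cinner x x = 0 \<longleftrightarrow> x = 0"
    and norm_eq_sqrt_cinner: "norm x = sqrt (Re (cinner x x))"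

class chilbert_space = complex_inner + complete_space

definition bounded_clinear :: "('a::complex_inner \<Rightarrow> 'b::complex_inner) \<Rightarrow> bool" where
  "bounded_clinear T \<longleftrightarrow>
     (\<forall>x y. T (x + y) = T x + T y) \<and> (\<forall>c x. T (c *\<^sub>C x) = c *\<^sub>C T x) \<and>
     (\<exists>K. \<forall>x. norm (T x) \<le> norm x * K)"

definition is_adjoint :: "('a::complex_inner \<Rightarrow> 'a) \<Rightarrow> ('a \<Rightarrow> 'a) \<Rightarrow> bool" where
  "is_adjoint S A \<longleftrightarrow> (\<forall>x y. cinner (A x) y = cinner x (S y))"

text \<open>Numerical radius omega(T) = sup{|<Tx,x>| : ||x|| = 1}; the 0 only matters for the
trivial space (where the sup over the empty set is 0 by convention); all values are >= 0.\<close>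
definition numerical_radius :: "('a::complex_inner \<Rightarrow> 'a) \<Rightarrow> real" where
  "numerical_radius T = Sup (insert 0 {cmod (cinner (T x) x) | x. norm x = 1})"

end

theory Submission
  imports Defs
begin

context complex_inner begin

lemma ci_zero_left[simp]: "cinner 0 y = 0"
  using cinner_add_left[of 0 0 y] by simp

lemma ci_zero_right[simp]: "cinner y 0 = 0"
  using cinner_commute[of y 0] by simp

lemma ci_add_right: "cinner x (y + z) = cinner x y + cinner x z"
proof -
  have "cinner x (y + z) = cnj (cinner (y + z) x)" by (rule cinner_commute)
  also have "\<dots> = cnj (cinner y x) + cnj (cinner z x)" by (simp add: cinner_add_left)
  finally show ?thesis by (simp add: cinner_commute[of x y] cinner_commute[of x z])
qed

lemma ci_scaleC_right: "cinner x (a *\<^sub>C y) = cnj a * cinner x y"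
proof -
  have "cinner x (a *\<^sub>C y) = cnj (cinner (a *\<^sub>C y) x)" by (rule cinner_commute)
  also have "\<dots> = cnj a * cnj (cinner y x)" by (simp add: cinner_scaleC_left)
  finally show ?thesis by (simp add: cinner_commute[of x y])
qed

lemma ci_minus_left: "cinner (- x) y = - cinner x y"
proof -
  have "cinner x y + cinner (- x) y = 0" using cinner_add_left[of x "-x" y] by simp
  then have "- cinner x y = cinner (- x) y" by (rule Groups.group_add_class.minus_unique)
  then show ?thesis by (rule sym)
qed

lemma ci_minus_right: "cinner y (- x) = - cinner y x"
proof -
  have "cinner y (- x) = cnj (cinner (- x) y)" by (rule cinner_commute)
  also have "\<dots> = - cnj (cinner x y)" by (simp add: ci_minus_left)
  finally show ?thesis by (simp add: cinner_commute[of y x])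
qed

lemma ci_diff_left: "cinner (x - z) y = cinner x y - cinner z y"
  by (simp only: diff_conv_add_uminus Groups.group_add_class.diff_conv_add_uminus cinner_add_left ci_minus_left)

lemma ci_diff_right: "cinner y (x - z) = cinner y x - cinner y z"
  by (simp only: diff_conv_add_uminus Groups.group_add_class.diff_conv_add_uminus ci_add_right ci_minus_right)

lemma ci_self: "cinner x x = complex_of_real ((norm x)\<^sup>2)"
  using cinner_real_nonneg[of x] norm_eq_sqrt_cinner[of x]
  by (simp add: complex_eq_iff)

lemma ci_cs: "cmod (cinner x y) \<le> norm x * norm y"
proof (cases "y = 0")
  case True then show ?thesis by simp
next
  case False
  define N where "N = (norm y)\<^sup>2"
  have N: "N > 0" using False N_def by simp
  define c where "c = cinner x y"
  define t where "t = c / complex_of_real N"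
  have yy: "cinner y y = complex_of_real N" using ci_self N_def by simp
  have yx: "cinner y x = cnj c" unfolding c_def by (rule cinner_commute)
  have "cinner (x - t *\<^sub>C y) (x - t *\<^sub>C y) =
     cinner x x - cnj t * c - t * cnj c + t * cnj t * complex_of_real N"
    by (simp add: ci_diff_left ci_diff_right cinner_scaleC_left ci_scaleC_right yy yx c_def algebra_simps)
  also have "\<dots> = complex_of_real ((norm x)\<^sup>2 - (cmod c)\<^sup>2 / N)"
    using N unfolding t_def ci_self
    by (simp add: complex_eq_iff field_simps power2_eq_square cmod_def)
  finally have E: "cinner (x - t *\<^sub>C y) (x - t *\<^sub>C y) = complex_of_real ((norm x)\<^sup>2 - (cmod c)\<^sup>2 / N)" .
  have "0 \<le> Re (cinner (x - t *\<^sub>C y) (x - t *\<^sub>C y))" using cinner_real_nonneg by blast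
  with E have "0 \<le> (norm x)\<^sup>2 - (cmod c)\<^sup>2 / N" by simp
  then have "(cmod c)\<^sup>2 \<le> (norm x)\<^sup>2 * (norm y)\<^sup>2" using N N_def by (simp add: field_simps)
  then have "(cmod c)\<^sup>2 \<le> (norm x * norm y)\<^sup>2" by (simp add: power_mult_distrib)
  from power2_le_imp_le[OF this] show ?thesis unfolding c_def by simp
qed

lemma ci_scaleR_left: "cinner (scaleR r x) y = complex_of_real r * cinner x y"
  by (simp add: scaleR_scaleC cinner_scaleC_left)

lemma ci_scaleR_right: "cinner y (scaleR r x) = complex_of_real r * cinner y x"
  by (simp add: scaleR_scaleC ci_scaleC_right)

end

lemma bcl_bl: assumes "bounded_clinear T" shows "bounded_linear T"
proof -
  have a: "T (x + y) = T x + T y" for x y using assms unfolding bounded_clinear_def by blast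
  have s: "T (scaleR r x) = scaleR r (T x)" for r x using assms unfolding bounded_clinear_def
    by (simp add: scaleR_scaleC)
  obtain K where "\<forall>x. norm (T x) \<le> norm x * K" using assms unfolding bounded_clinear_def by blast
  then show ?thesis by (intro bounded_linear_intro[of _ K]) (auto simp: a s)
qed

lemma bcl_scaleC: "bounded_clinear T \<Longrightarrow> T (c *\<^sub>C x) = c *\<^sub>C T x"
  unfolding bounded_clinear_def by blast

lemma adj_bound:
  fixes A As :: "'a::complex_inner \<Rightarrow> 'a"
  assumes "bounded_clinear A" "is_adjoint As A"
  shows "norm (As y) \<le> onorm A * norm y"
proof (cases "As y = 0")
  case True then show ?thesis using onorm_pos_le[OF bcl_bl[OF assms(1)]] by simp
next
  case False
  have "(norm (As y))\<^sup>2 = Re (cinner (As y) (As y))" by (simp add: ci_self)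
  also have "\<dots> = Re (cinner (A (As y)) y)" using assms(2) unfolding is_adjoint_def by simp
  also have "\<dots> \<le> cmod (cinner (A (As y)) y)" by (rule complex_Re_le_cmod)
  also have "\<dots> \<le> norm (A (As y)) * norm y" by (rule ci_cs)
  also have "\<dots> \<le> onorm A * norm (As y) * norm y"
    by (intro mult_right_mono onorm[OF bcl_bl[OF assms(1)]]) simp
  finally have "norm (As y) * norm (As y) \<le> (onorm A * norm y) * norm (As y)"
    by (simp add: power2_eq_square algebra_simps)
  then show ?thesis using False by simp
qed


lemma key:
  fixes A B As :: "'a::complex_inner \<Rightarrow> 'a"
  assumes A: "bounded_clinear A" and B: "bounded_clinear B" and adj: "is_adjoint As A"
    and x: "norm x = 1" and y: "norm y = 1"
  shows "2 * cmod (cinner y (A x) * cinner (B x) y) \<le> onorm A * onorm B + cmod (cinner (B (As y)) y)"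
proof -
  define w where "w = As y"
  define c where "c = cinner w x"
  have c2: "c = cinner y (A x)"
  proof -
    have "c = cnj (cinner x (As y))" unfolding c_def w_def by (rule cinner_commute)
    also have "\<dots> = cnj (cinner (A x) y)" using adj unfolding is_adjoint_def by simp
    also have "\<dots> = cinner y (A x)" by (simp add: cinner_commute[of y "A x"])
    finally show ?thesis .
  qed
  have cx: "cinner x w = cnj c" unfolding c_def by (rule cinner_commute)
  have xx: "cinner x x = 1" using x by (simp add: ci_self)
  define r where "r = (2 * c) *\<^sub>C x - w"
  have lB: "bounded_linear B" by (rule bcl_bl[OF B])
  have Br: "B r = (2 * c) *\<^sub>C B x - B w" unfolding r_def
    using bcl_scaleC[OF B] linear_diff[OF bounded_linear.linear[OF lB]] by simp
  have eq: "2 * (cinner y (A x) * cinner (B x) y) = cinner (B r) y + cinner (B w) y"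
    unfolding Br c2[symmetric] by (simp add: ci_diff_left cinner_scaleC_left)
  have "cinner r r = cinner ((2 * c) *\<^sub>C x) ((2 * c) *\<^sub>C x) - cinner ((2 * c) *\<^sub>C x) w
      - cinner w ((2 * c) *\<^sub>C x) + cinner w w"
    unfolding r_def by (simp only: ci_diff_left ci_diff_right) simp
  also have "\<dots> = (2 * c) * cnj (2 * c) * cinner x x - (2 * c) * cinner x w - cnj (2 * c) * cinner w x + cinner w w"
    by (simp add: cinner_scaleC_left ci_scaleC_right mult_ac)
  also have "\<dots> = cinner w w"
    unfolding xx cx c_def[symmetric] by (simp add: algebra_simps)
  finally have "cinner r r = complex_of_real ((norm w)\<^sup>2)" by (simp add: ci_self)
  then have "complex_of_real ((norm r)\<^sup>2) = complex_of_real ((norm w)\<^sup>2)" by (simp only: ci_self)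
  then have "(norm r)\<^sup>2 = (norm w)\<^sup>2" by (rule of_real_eq_iff[THEN iffD1])
  then have nr: "norm r = norm w" using power2_eq_iff_nonneg[of "norm r" "norm w"] by simp
  have "2 * cmod (cinner y (A x) * cinner (B x) y) = cmod (cinner (B r) y + cinner (B w) y)"
    using arg_cong[OF eq, of cmod] by (simp add: norm_mult)
  also have "\<dots> \<le> cmod (cinner (B r) y) + cmod (cinner (B w) y)" by (rule norm_triangle_ineq)
  also have "cmod (cinner (B r) y) \<le> onorm A * onorm B"
  proof -
    have "cmod (cinner (B r) y) \<le> norm (B r) * norm y" by (rule ci_cs)
    also have "\<dots> \<le> onorm B * norm r" using y onorm[OF lB] by simp
    also have "\<dots> \<le> onorm B * onorm A" unfolding nr w_def
      using adj_bound[OF A adj, of y] y onorm_pos_le[OF lB] by (simp add: mult_left_mono)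
    finally show ?thesis by (simp add: mult.commute)
  qed
  finally show ?thesis unfolding w_def by simp
qed


lemma nr_le:
  fixes T :: "'a::complex_inner \<Rightarrow> 'a"
  assumes "\<And>x. norm x = 1 \<Longrightarrow> cmod (cinner (T x) x) \<le> M" "0 \<le> M"
  shows "numerical_radius T \<le> M" "0 \<le> numerical_radius T"
    "\<And>x. norm x = 1 \<Longrightarrow> cmod (cinner (T x) x) \<le> numerical_radius T"
proof -
  let ?S = "insert 0 {cmod (cinner (T x) x) | x. norm x = 1}"
  have bdd: "bdd_above ?S" using assms unfolding bdd_above_def by auto
  show "numerical_radius T \<le> M" unfolding numerical_radius_def
    using assms by (intro cSup_least) auto
  show "0 \<le> numerical_radius T" unfolding numerical_radius_def
    using bdd by (intro cSup_upper) auto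
  show "\<And>x. norm x = 1 \<Longrightarrow> cmod (cinner (T x) x) \<le> numerical_radius T"
    unfolding numerical_radius_def using bdd by (intro cSup_upper) auto
qed

theorem mainTheorem4:
  fixes A B As :: "'a::chilbert_space \<Rightarrow> 'a" and h :: "real \<Rightarrow> real"
  assumes "bounded_clinear A" and "bounded_clinear B"
    and "is_adjoint As A"
    and "\<forall>t\<ge>0. h t \<ge> 0" and "mono_on {0..} h" and "convex_on {0..} h"
  shows "h (numerical_radius (As \<circ> B))
           \<le> 1/2 * h (onorm A * onorm B) + 1/2 * h (numerical_radius (B \<circ> As))"
proof -
  note A = assms(1) and B = assms(2) and adj = assms(3)
  have lA: "bounded_linear A" by (rule bcl_bl[OF A])
  have lB: "bounded_linear B" by (rule bcl_bl[OF B])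
  define a where "a = onorm A * onorm B"
  have a0: "0 \<le> a" unfolding a_def using onorm_pos_le[OF lA] onorm_pos_le[OF lB] by simp
  have bnd2: "cmod (cinner ((B \<circ> As) y) y) \<le> a" if "norm y = 1" for y
  proof -
    have "cmod (cinner ((B \<circ> As) y) y) \<le> norm (B (As y)) * norm y" using ci_cs by simp
    also have "\<dots> \<le> onorm B * norm (As y)" using that onorm[OF lB] by simp
    also have "\<dots> \<le> onorm B * onorm A" 
      using adj_bound[OF A adj, of y] that onorm_pos_le[OF lB] by (simp add: mult_left_mono)
    finally show ?thesis unfolding a_def by (simp add: mult.commute)
  qed
  define b where "b = numerical_radius (B \<circ> As)"
  have b0: "0 \<le> b" unfolding b_def by (rule nr_le(2)[OF bnd2 a0])
  have bb: "\<And>y. norm y = 1 \<Longrightarrow> cmod (cinner ((B \<circ> As) y) y) \<le> b"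
    unfolding b_def by (rule nr_le(3)[OF bnd2 a0])
  have bnd1: "cmod (cinner ((As \<circ> B) x) x) \<le> (a + b) / 2" if x: "norm x = 1" for x
  proof -
    have e1: "cinner ((As \<circ> B) x) x = cinner (B x) (A x)"
    proof -
      have "cinner ((As \<circ> B) x) x = cnj (cinner x (As (B x)))" unfolding comp_apply by (rule cinner_commute)
      also have "\<dots> = cnj (cinner (A x) (B x))" using adj unfolding is_adjoint_def by simp
      also have "\<dots> = cinner (B x) (A x)" by (simp add: cinner_commute[of "B x" "A x"])
      finally show ?thesis .
    qed
    show ?thesis
    proof (cases "B x = 0")
      case True then show ?thesis using e1 a0 b0 by simp
    next
      case False
      define s where "s = 1 / norm (B x)"
      define y where "y = scaleR s (B x)"
      have ny: "norm y = 1" unfolding y_def s_def using False by simp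
      have "cinner y (A x) * cinner (B x) y = cinner (B x) (A x)"
        unfolding y_def ci_scaleR_left ci_scaleR_right ci_self using False
        by (simp add: s_def power2_eq_square)
      then have "2 * cmod (cinner (B x) (A x)) \<le> a + cmod (cinner (B (As y)) y)"
        using key[OF A B adj x ny] unfolding a_def by simp
      also have "cmod (cinner (B (As y)) y) \<le> b" using bb[OF ny] by simp
      finally show ?thesis using e1 by simp
    qed
  qed
  have m0: "0 \<le> (a + b) / 2" using a0 b0 by simp
  have w1: "numerical_radius (As \<circ> B) \<le> (a + b) / 2" by (rule nr_le(1)[OF bnd1 m0])
  have w0: "0 \<le> numerical_radius (As \<circ> B)" by (rule nr_le(2)[OF bnd1 m0])
  have "h (numerical_radius (As \<circ> B)) \<le> h ((a + b) / 2)"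
    using assms(5) w0 w1 a0 b0 by (intro mono_onD[OF assms(5)]) auto
  also have "h ((a + b) / 2) = h ((1 - 1/2) *\<^sub>R a + (1/2) *\<^sub>R b)" by (simp add: field_simps)
  also have "\<dots> \<le> (1 - 1/2) * h a + (1/2) * h b"
    using a0 b0 by (intro convex_onD[OF assms(6)]) auto
  finally show ?thesis unfolding a_def b_def by simp
qed

end
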